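(* Let $S$ be a semigroup. Then $S^0$ is finitely right equated if and only if $S$ is finitely right equated and $S=US^1$ for some finite set $U\subseteq S$.
   Context: $S^0$ is $S$ if $S$ has a zero and otherwise $S$ with a zero adjoined; $S^1$ is $S$ if $S$ is a monoid and otherwise $S$ with an identity adjoined. For $a\in S$, $\mathbf{r}_S(a)=\{(s,t)\in S\times S\mid as=at\}$; $S$ is finitely right equated if each $\mathbf{r}_S(a)$ is finitely generated as a right congruence. *)

theory Defs
  imports Main
begin

definition semigroup_on :: "'a set \<Rightarrow> ('a \<Rightarrow> 'a \<Rightarrow> 'a) \<Rightarrow> bool" where
  "semigroup_on S f \<longleftrightarrow>
     (\<forall>x\<in>S. \<forall>y\<in>S. f x y \<in> S) \<and>
     (\<forall>x\<in>S. \<forall>y\<in>S. \<forall>z\<in>S. f (f x y) z = f x (f y z))"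

definition right_congruence :: "'a set \<Rightarrow> ('a \<Rightarrow> 'a \<Rightarrow> 'a) \<Rightarrow> ('a \<times> 'a) set \<Rightarrow> bool" where
  "right_congruence S f \<rho> \<longleftrightarrow>
     equiv S \<rho> \<and> (\<forall>s t u. (s, t) \<in> \<rho> \<and> u \<in> S \<longrightarrow> (f s u, f t u) \<in> \<rho>)"

definition rcong_gen :: "'a set \<Rightarrow> ('a \<Rightarrow> 'a \<Rightarrow> 'a) \<Rightarrow> ('a \<times> 'a) set \<Rightarrow> ('a \<times> 'a) set" where
  "rcong_gen S f X = \<Inter> {\<rho>. right_congruence S f \<rho> \<and> X \<subseteq> \<rho>}"

definition fg_right_congruence :: "'a set \<Rightarrow> ('a \<Rightarrow> 'a \<Rightarrow> 'a) \<Rightarrow> ('a \<times> 'a) set \<Rightarrow> bool" where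
  "fg_right_congruence S f \<rho> \<longleftrightarrow>
     right_congruence S f \<rho> \<and> (\<exists>X. finite X \<and> X \<subseteq> S \<times> S \<and> \<rho> = rcong_gen S f X)"

definition rann :: "'a set \<Rightarrow> ('a \<Rightarrow> 'a \<Rightarrow> 'a) \<Rightarrow> 'a \<Rightarrow> ('a \<times> 'a) set" where
  "rann S f a = {(s, t). s \<in> S \<and> t \<in> S \<and> f a s = f a t}"

definition fin_right_equated :: "'a set \<Rightarrow> ('a \<Rightarrow> 'a \<Rightarrow> 'a) \<Rightarrow> bool" where
  "fin_right_equated S f \<longleftrightarrow> (\<forall>a\<in>S. fg_right_congruence S f (rann S f a))"

definition has_zero :: "'a set \<Rightarrow> ('a \<Rightarrow> 'a \<Rightarrow> 'a) \<Rightarrow> bool" where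
  "has_zero S f \<longleftrightarrow> (\<exists>z\<in>S. \<forall>s\<in>S. f z s = z \<and> f s z = z)"

text \<open>S^0, realised on the type 'a option: if S has a zero it is (a copy of) S itself,
otherwise None is the adjoined zero.\<close>
definition zero_adj_carrier :: "'a set \<Rightarrow> ('a \<Rightarrow> 'a \<Rightarrow> 'a) \<Rightarrow> 'a option set" where
  "zero_adj_carrier S f = (if has_zero S f then Some ` S else insert None (Some ` S))"

fun zero_adj_mult :: "('a \<Rightarrow> 'a \<Rightarrow> 'a) \<Rightarrow> 'a option \<Rightarrow> 'a option \<Rightarrow> 'a option" where
  "zero_adj_mult f (Some x) (Some y) = Some (f x y)"
| "zero_adj_mult f _ _ = None"

text \<open>The set U S^1 = U \<union> U S (u\<cdot>1 = u).\<close>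
definition right_ideal_gen :: "'a set \<Rightarrow> ('a \<Rightarrow> 'a \<Rightarrow> 'a) \<Rightarrow> 'a set \<Rightarrow> 'a set" where
  "right_ideal_gen S f U = U \<union> {f u s | u s. u \<in> U \<and> s \<in> S}"

end

theory Submission
  imports Defs
begin

lemma rc_equiv_iff:
  "right_congruence S f r \<longleftrightarrow>
    r \<subseteq> S \<times> S \<and> (\<forall>x\<in>S. (x,x) \<in> r) \<and> (\<forall>x y. (x,y)\<in>r \<longrightarrow> (y,x)\<in>r)
    \<and> (\<forall>x y z. (x,y)\<in>r \<longrightarrow> (y,z)\<in>r \<longrightarrow> (x,z)\<in>r)
    \<and> (\<forall>s t u. (s, t) \<in> r \<and> u \<in> S \<longrightarrow> (f s u, f t u) \<in> r)"
  unfolding right_congruence_def equiv_def refl_on_def sym_def trans_def by blast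

lemma rcong_gen_rc:
  assumes sg: "semigroup_on S f" and X: "X \<subseteq> S \<times> S"
  shows "right_congruence S f (rcong_gen S f X)"
proof -
  define F where "F = {\<rho>. right_congruence S f \<rho> \<and> X \<subseteq> \<rho>}"
  have full: "right_congruence S f (S \<times> S)" using sg
    unfolding rc_equiv_iff semigroup_on_def by auto
  have ne: "(S \<times> S) \<in> F" using full X unfolding F_def by simp
  have R: "right_congruence S f \<rho>" if "\<rho> \<in> F" for \<rho> using that unfolding F_def by simp
  have eq: "rcong_gen S f X = \<Inter> F" unfolding rcong_gen_def F_def ..
  show ?thesis unfolding eq rc_equiv_iff
  proof (intro conjI allI impI ballI)
    show "\<Inter> F \<subseteq> S \<times> S" using ne by blast
  next
    fix x assume "x \<in> S"
    then show "(x,x) \<in> \<Inter> F" using R unfolding rc_equiv_iff by blast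
  next
    fix x y assume "(x,y) \<in> \<Inter> F"
    then show "(y,x) \<in> \<Inter> F" using R unfolding rc_equiv_iff by blast
  next
    fix x y z assume "(x,y) \<in> \<Inter> F" "(y,z) \<in> \<Inter> F"
    then show "(x,z) \<in> \<Inter> F"
    proof (intro InterI)
      fix \<rho> assume "\<rho> \<in> F"
      then have "(x,y) \<in> \<rho>" "(y,z) \<in> \<rho>" "right_congruence S f \<rho>" using \<open>(x,y) \<in> \<Inter> F\<close> \<open>(y,z) \<in> \<Inter> F\<close> R by auto
      then show "(x,z) \<in> \<rho>" unfolding rc_equiv_iff by blast
    qed
  next
    fix s t u assume "(s, t) \<in> \<Inter> F \<and> u \<in> S"
    then show "(f s u, f t u) \<in> \<Inter> F" using R unfolding rc_equiv_iff by blast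
  qed
qed

lemma rcong_gen_sub: "X \<subseteq> rcong_gen S f X"
  unfolding rcong_gen_def by blast

lemma rcong_gen_least: "right_congruence S f r \<Longrightarrow> X \<subseteq> r \<Longrightarrow> rcong_gen S f X \<subseteq> r"
  unfolding rcong_gen_def by blast

lemma rig_closed:
  assumes sg: "semigroup_on S f" and U: "U \<subseteq> S" and x: "x \<in> right_ideal_gen S f U" and u: "u \<in> S"
  shows "f x u \<in> right_ideal_gen S f U"
proof -
  from x consider "x \<in> U" | v w where "v \<in> U" "w \<in> S" "x = f v w"
    unfolding right_ideal_gen_def by blast
  then show ?thesis
  proof cases
    case 1 then show ?thesis using u unfolding right_ideal_gen_def by blast
  next
    case 2
    have "f x u = f v (f w u)" using sg 2 U u unfolding semigroup_on_def by blast
    moreover have "f w u \<in> S" using sg 2 u unfolding semigroup_on_def by blast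
    ultimately show ?thesis using 2 unfolding right_ideal_gen_def by blast
  qed
qed

lemma rig_sub:
  assumes sg: "semigroup_on S f" and U: "U \<subseteq> S"
  shows "right_ideal_gen S f U \<subseteq> S"
  using sg U unfolding right_ideal_gen_def semigroup_on_def by blast

lemma zero_case:
  assumes sg: "semigroup_on S f" and z: "z \<in> S" "\<forall>s\<in>S. f z s = z \<and> f s z = z"
    and fre: "fin_right_equated S f"
  shows "\<exists>U. finite U \<and> U \<subseteq> S \<and> S = right_ideal_gen S f U"
proof -
  have "fg_right_congruence S f (rann S f z)" using fre z(1) unfolding fin_right_equated_def by blast
  then obtain X where X: "finite X" "X \<subseteq> S \<times> S" "rann S f z = rcong_gen S f X"
    unfolding fg_right_congruence_def by blast
  define U where "U = insert z (fst ` X \<union> snd ` X)"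
  have Uf: "finite U" using X(1) unfolding U_def by simp
  have US: "U \<subseteq> S" using X(2) z unfolding U_def by auto
  define T where "T = right_ideal_gen S f U"
  have TS: "T \<subseteq> S" using rig_sub[OF sg US] T_def by simp
  define r where "r = {(x,y). x \<in> S \<and> y \<in> S \<and> (x = y \<or> x \<in> T \<and> y \<in> T)}"
  have "right_congruence S f r"
    unfolding rc_equiv_iff
  proof (intro conjI allI impI ballI)
    fix s t u assume st: "(s, t) \<in> r \<and> u \<in> S"
    have "s \<in> S" "t \<in> S" using st unfolding r_def by auto
    then have "f s u \<in> S" "f t u \<in> S" using st sg unfolding semigroup_on_def by blast+
    moreover have "s \<in> T \<and> t \<in> T \<Longrightarrow> f s u \<in> T \<and> f t u \<in> T"
      using rig_closed[OF sg US] st unfolding T_def by blast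
    ultimately show "(f s u, f t u) \<in> r" using st unfolding r_def by auto
  next
    show "r \<subseteq> S \<times> S" unfolding r_def by blast
  next
    fix x assume "x \<in> S" then show "(x,x) \<in> r" unfolding r_def by blast
  next
    fix x y assume "(x,y) \<in> r" then show "(y,x) \<in> r" unfolding r_def by blast
  next
    fix x y z assume "(x,y) \<in> r" "(y,z) \<in> r" then show "(x,z) \<in> r" unfolding r_def by blast
  qed
  moreover have "X \<subseteq> r"
  proof
    fix p assume p: "p \<in> X"
    obtain a b where ab: "p = (a,b)" by fastforce
    have "a \<in> U" "b \<in> U" using p ab unfolding U_def by (simp_all add: rev_image_eqI)
    then have "a \<in> T" "b \<in> T" unfolding T_def right_ideal_gen_def by auto
    then show "p \<in> r" using ab TS unfolding r_def by auto
  qed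
  ultimately have sub: "rcong_gen S f X \<subseteq> r" by (rule rcong_gen_least)
  have "S \<subseteq> T"
  proof
    fix s assume s: "s \<in> S"
    have "(z, s) \<in> rann S f z" using s z unfolding rann_def by auto
    then have "(z, s) \<in> r" using sub X(3) by auto
    moreover have "z \<in> T" unfolding T_def right_ideal_gen_def U_def by auto
    ultimately show "s \<in> T" unfolding r_def by auto
  qed
  then show ?thesis using TS Uf US T_def by blast
qed

lemma S0_bounds:
  "Some ` S \<subseteq> zero_adj_carrier S f" "zero_adj_carrier S f \<subseteq> insert None (Some ` S)"
  unfolding zero_adj_carrier_def by auto

lemma f0_cases: "zero_adj_mult f x y = (case x of None \<Rightarrow> None | Some a \<Rightarrow> (case y of None \<Rightarrow> None | Some b \<Rightarrow> Some (f a b)))"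
  by (cases x; cases y) auto

lemma sg0:
  assumes sg: "semigroup_on S f"
  shows "semigroup_on (zero_adj_carrier S f) (zero_adj_mult f)"
proof -
  have A: "Some ` S \<subseteq> zero_adj_carrier S f" "zero_adj_carrier S f \<subseteq> insert None (Some ` S)"
    by (rule S0_bounds)+
  have None: "None \<in> zero_adj_carrier S f" if "\<not> has_zero S f"
    using that unfolding zero_adj_carrier_def by auto
  have cl: "zero_adj_mult f x y \<in> zero_adj_carrier S f" if "x \<in> zero_adj_carrier S f" "y \<in> zero_adj_carrier S f" for x y
  proof (cases "x = None \<or> y = None")
    case True
    then have e: "zero_adj_mult f x y = None" by (auto simp: f0_cases split: option.splits)
    show ?thesis
    proof (cases "has_zero S f")
      case False then show ?thesis using None e by simp
    next
      case True
      then have "zero_adj_carrier S f = Some ` S" unfolding zero_adj_carrier_def by simp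
      then show ?thesis using that True \<open>x = None \<or> y = None\<close> by auto
    qed
  next
    case False
    then obtain a b where ab: "x = Some a" "y = Some b" by auto
    then have "a \<in> S" "b \<in> S" using that A by auto
    then have "f a b \<in> S" using sg unfolding semigroup_on_def by blast
    then show ?thesis using ab A by auto
  qed
  have as: "zero_adj_mult f (zero_adj_mult f x y) z = zero_adj_mult f x (zero_adj_mult f y z)"
    if "x \<in> zero_adj_carrier S f" "y \<in> zero_adj_carrier S f" "z \<in> zero_adj_carrier S f" for x y z
  proof (cases "x = None \<or> y = None \<or> z = None")
    case True then show ?thesis by (auto simp: f0_cases split: option.splits)
  next
    case False
    then obtain a b c where abc: "x = Some a" "y = Some b" "z = Some c" by auto
    then have "a \<in> S" "b \<in> S" "c \<in> S" using that A by auto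
    then show ?thesis using abc sg unfolding semigroup_on_def by auto
  qed
  show ?thesis unfolding semigroup_on_def using cl as by blast
qed

lemma hz0:
  "\<exists>z\<in>zero_adj_carrier S f. \<forall>s\<in>zero_adj_carrier S f. zero_adj_mult f z s = z \<and> zero_adj_mult f s z = z"
proof (cases "has_zero S f")
  case True
  then obtain z where z: "z \<in> S" "\<forall>s\<in>S. f z s = z \<and> f s z = z" unfolding has_zero_def by blast
  have "zero_adj_carrier S f = Some ` S" using True unfolding zero_adj_carrier_def by simp
  then show ?thesis using z by (intro bexI[of _ "Some z"]) auto
next
  case False
  then show ?thesis unfolding zero_adj_carrier_def
    by (intro bexI[of _ None]) (auto simp: f0_cases split: option.splits)
qed

lemma rann0:
  assumes "a \<in> S"
  shows "rann (zero_adj_carrier S f) (zero_adj_mult f) (Some a)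
     = map_prod Some Some ` rann S f a \<union> Id_on (zero_adj_carrier S f - Some ` S)"
proof -
  have A: "Some ` S \<subseteq> zero_adj_carrier S f" "zero_adj_carrier S f \<subseteq> insert None (Some ` S)"
    by (rule S0_bounds)+
  show ?thesis
  proof (intro equalityI subsetI)
    fix p assume p: "p \<in> rann (zero_adj_carrier S f) (zero_adj_mult f) (Some a)"
    obtain x y where xy: "p = (x,y)" by fastforce
    show "p \<in> map_prod Some Some ` rann S f a \<union> Id_on (zero_adj_carrier S f - Some ` S)"
      using p A unfolding xy rann_def by (cases x; cases y) (auto simp: Id_on_def)
  next
    fix p assume p: "p \<in> map_prod Some Some ` rann S f a \<union> Id_on (zero_adj_carrier S f - Some ` S)"
    then show "p \<in> rann (zero_adj_carrier S f) (zero_adj_mult f) (Some a)"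
      using A unfolding rann_def Id_on_def by (auto simp: f0_cases split: option.splits)
  qed
qed

lemma rcS: "right_congruence S f r \<Longrightarrow> (x,y) \<in> r \<Longrightarrow> x \<in> S \<and> y \<in> S"
  unfolding rc_equiv_iff by blast
lemma rcR: "right_congruence S f r \<Longrightarrow> x \<in> S \<Longrightarrow> (x,x) \<in> r"
  unfolding rc_equiv_iff by blast
lemma rcSy: "right_congruence S f r \<Longrightarrow> (x,y) \<in> r \<Longrightarrow> (y,x) \<in> r"
  unfolding rc_equiv_iff by blast
lemma rcT: "right_congruence S f r \<Longrightarrow> (x,y) \<in> r \<Longrightarrow> (y,z) \<in> r \<Longrightarrow> (x,z) \<in> r"
  unfolding rc_equiv_iff by blast
lemma rcC: "right_congruence S f r \<Longrightarrow> (x,y) \<in> r \<Longrightarrow> u \<in> S \<Longrightarrow> (f x u, f y u) \<in> r"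
  unfolding rc_equiv_iff by blast

lemma gen0:
  assumes sg: "semigroup_on S f" and X: "X \<subseteq> S \<times> S"
  shows "rcong_gen (zero_adj_carrier S f) (zero_adj_mult f) (map_prod Some Some ` X)
     = map_prod Some Some ` rcong_gen S f X \<union> Id_on (zero_adj_carrier S f - Some ` S)"
    (is "?L = ?R")
proof -
  have A: "Some ` S \<subseteq> zero_adj_carrier S f" "zero_adj_carrier S f \<subseteq> insert None (Some ` S)"
    by (rule S0_bounds)+
  let ?S0 = "zero_adj_carrier S f" and ?f0 = "zero_adj_mult f"
  let ?G = "rcong_gen S f X"
  have sg0': "semigroup_on ?S0 ?f0" by (rule sg0[OF sg])
  have X0: "map_prod Some Some ` X \<subseteq> ?S0 \<times> ?S0" using X A by auto
  have rc: "right_congruence S f ?G" by (rule rcong_gen_rc[OF sg X])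
  have rc0: "right_congruence ?S0 ?f0 ?L" by (rule rcong_gen_rc[OF sg0' X0])
  have memR: "(x,y) \<in> ?R \<longleftrightarrow> (\<exists>a b. x = Some a \<and> y = Some b \<and> (a,b) \<in> ?G) \<or> (x = None \<and> y = None \<and> None \<in> ?S0)" for x y
    using A by (cases x; cases y) (auto simp: Id_on_def)
  have "right_congruence ?S0 ?f0 ?R"
    unfolding rc_equiv_iff
  proof (intro conjI allI impI ballI)
    show "?R \<subseteq> ?S0 \<times> ?S0"
    proof
      fix p assume "p \<in> ?R"
      then obtain x y where p: "p = (x,y)" "(x,y) \<in> ?R" by (cases p) auto
      from p(2) show "p \<in> ?S0 \<times> ?S0" unfolding memR p(1) using rcS[OF rc] A by blast
    qed
  next
    fix x assume x: "x \<in> ?S0"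
    show "(x,x) \<in> ?R"
    proof (cases x)
      case None then show ?thesis using x memR by simp
    next
      case (Some a) then have "a \<in> S" using x A by auto
      then have "(a,a) \<in> ?G" by (rule rcR[OF rc])
      then show ?thesis using Some memR by simp
    qed
  next
    fix x y assume "(x,y) \<in> ?R" then show "(y,x) \<in> ?R"
      unfolding memR using rcSy[OF rc] by blast
  next
    fix x y z assume "(x,y) \<in> ?R" "(y,z) \<in> ?R" then show "(x,z) \<in> ?R"
      unfolding memR using rcT[OF rc] by blast
  next
    fix s t u assume st: "(s, t) \<in> ?R \<and> u \<in> ?S0"
    show "(?f0 s u, ?f0 t u) \<in> ?R"
    proof (cases u)
      case None
      then have "None \<in> ?S0" using st by simp
      then show ?thesis using None memR by (simp add: f0_cases split: option.splits)
    next
      case (Some c) then have c: "c \<in> S" using st A by auto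
      from st consider a b where "s = Some a" "t = Some b" "(a,b) \<in> ?G"
        | "s = None" "t = None" unfolding memR by blast
      then show ?thesis
      proof cases
        case 1
        then have "(f a c, f b c) \<in> ?G" using rcC[OF rc _ c] by blast
        then show ?thesis using 1 Some memR by simp
      next
        case 2
        then show ?thesis using Some memR st by simp
      qed
    qed
  qed
  moreover have "map_prod Some Some ` X \<subseteq> ?R" using rcong_gen_sub[of X S f] by auto
  ultimately have LR: "?L \<subseteq> ?R" by (rule rcong_gen_least)
  define r where "r = {(a,b). (Some a, Some b) \<in> ?L}"
  have "right_congruence S f r"
    unfolding rc_equiv_iff
  proof (intro conjI allI impI ballI)
    show "r \<subseteq> S \<times> S"
    proof
      fix p assume "p \<in> r"
      then obtain x y where p: "p = (x,y)" "(Some x, Some y) \<in> ?L" unfolding r_def by auto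
      then have "Some x \<in> ?S0" "Some y \<in> ?S0" using rcS[OF rc0] by blast+
      then show "p \<in> S \<times> S" using A p(1) by auto
    qed
  next
    fix x assume "x \<in> S" then have "Some x \<in> ?S0" using A by auto
    then show "(x,x) \<in> r" using rcR[OF rc0] unfolding r_def by simp
  next
    fix x y assume "(x,y) \<in> r" then show "(y,x) \<in> r" using rcSy[OF rc0] unfolding r_def by simp
  next
    fix x y z assume "(x,y) \<in> r" "(y,z) \<in> r" then show "(x,z) \<in> r"
      using rcT[OF rc0] unfolding r_def by simp
  next
    fix s t u assume st: "(s, t) \<in> r \<and> u \<in> S"
    then have "Some u \<in> ?S0" using A by auto
    then have "(?f0 (Some s) (Some u), ?f0 (Some t) (Some u)) \<in> ?L"
      using rcC[OF rc0, of "Some s" "Some t" "Some u"] st unfolding r_def by blast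
    then show "(f s u, f t u) \<in> r" unfolding r_def by simp
  qed
  moreover have "X \<subseteq> r" using rcong_gen_sub[of "map_prod Some Some ` X" ?S0 ?f0] unfolding r_def by auto
  ultimately have "?G \<subseteq> r" by (rule rcong_gen_least)
  then have "map_prod Some Some ` ?G \<subseteq> ?L" unfolding r_def by auto
  moreover have "Id_on (?S0 - Some ` S) \<subseteq> ?L" using rcR[OF rc0] unfolding Id_on_def by auto
  ultimately show ?thesis using LR by blast
qed

lemma ms_inj: "(map_prod Some Some p \<in> map_prod Some Some ` R) = (p \<in> R)"
  by (cases p) auto

lemma fgE: "fg_right_congruence S f r \<Longrightarrow> \<exists>X. finite X \<and> X \<subseteq> S \<times> S \<and> r = rcong_gen S f X"
  unfolding fg_right_congruence_def by (elim conjE)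

lemma fgI: "semigroup_on S f \<Longrightarrow> finite X \<Longrightarrow> X \<subseteq> S \<times> S \<Longrightarrow> r = rcong_gen S f X \<Longrightarrow> fg_right_congruence S f r"
  unfolding fg_right_congruence_def using rcong_gen_rc by blast

lemma fg_iff:
  assumes sg: "semigroup_on S f" and a: "a \<in> S"
  shows "fg_right_congruence (zero_adj_carrier S f) (zero_adj_mult f) (rann (zero_adj_carrier S f) (zero_adj_mult f) (Some a))
     \<longleftrightarrow> fg_right_congruence S f (rann S f a)"
proof -
  let ?S0 = "zero_adj_carrier S f" and ?f0 = "zero_adj_mult f"
  have A: "Some ` S \<subseteq> ?S0" "?S0 \<subseteq> insert None (Some ` S)"
    by (rule S0_bounds)+
  have sg0': "semigroup_on ?S0 ?f0" by (rule sg0[OF sg])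
  have R0: "rann ?S0 ?f0 (Some a) = map_prod Some Some ` rann S f a \<union> Id_on (?S0 - Some ` S)"
    by (rule rann0[OF a])
  show ?thesis
  proof
    assume "fg_right_congruence ?S0 ?f0 (rann ?S0 ?f0 (Some a))"
    from fgE[OF this] obtain X0 where X0: "finite X0" "X0 \<subseteq> ?S0 \<times> ?S0" "rann ?S0 ?f0 (Some a) = rcong_gen ?S0 ?f0 X0"
      by (elim exE conjE) (rule that)
    define X where "X = {(s,t). (Some s, Some t) \<in> X0}"
    have Xsub: "X \<subseteq> map_prod the the ` X0"
    proof
      fix p assume "p \<in> X"
      then obtain s t where "p = (s,t)" "(Some s, Some t) \<in> X0" unfolding X_def by auto
      then show "p \<in> map_prod the the ` X0" by (auto intro: rev_image_eqI)
    qed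
    have Xf: "finite X" using finite_subset[OF Xsub] X0(1) by blast
    have XS: "X \<subseteq> S \<times> S"
    proof
      fix p assume "p \<in> X"
      then obtain s t where "p = (s,t)" "(Some s, Some t) \<in> X0" unfolding X_def by auto
      then have "Some s \<in> ?S0" "Some t \<in> ?S0" using X0(2) by auto
      then show "p \<in> S \<times> S" using A \<open>p = (s,t)\<close> by auto
    qed
    have X0r: "X0 \<subseteq> rann ?S0 ?f0 (Some a)" unfolding X0(3) by (rule rcong_gen_sub)
    have eqset: "{\<rho>. right_congruence ?S0 ?f0 \<rho> \<and> X0 \<subseteq> \<rho>} = {\<rho>. right_congruence ?S0 ?f0 \<rho> \<and> map_prod Some Some ` X \<subseteq> \<rho>}"
    proof (intro Collect_cong conj_cong refl iffI)
      fix \<rho> assume "X0 \<subseteq> \<rho>" then show "map_prod Some Some ` X \<subseteq> \<rho>" unfolding X_def by auto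
    next
      fix \<rho> assume rc: "right_congruence ?S0 ?f0 \<rho>" and sub: "map_prod Some Some ` X \<subseteq> \<rho>"
      show "X0 \<subseteq> \<rho>"
      proof
        fix p assume p: "p \<in> X0"
        obtain x y where xy: "p = (x,y)" by fastforce
        have pr: "(x,y) \<in> map_prod Some Some ` rann S f a \<union> Id_on (?S0 - Some ` S)"
          using X0r p xy R0 by blast
        show "p \<in> \<rho>"
        proof (cases x; cases y)
          fix b c assume "x = Some b" "y = Some c"
          then have "(b,c) \<in> X" using p xy unfolding X_def by simp
          then show ?thesis using sub xy \<open>x = Some b\<close> \<open>y = Some c\<close> by force
        next
          assume "x = None" "y = None"
          then have "None \<in> ?S0" using p xy X0(2) by auto
          then show ?thesis using rcR[OF rc] xy \<open>x = None\<close> \<open>y = None\<close> by simp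
        next
          fix c assume "x = None" "y = Some c"
          then have False using pr by (auto simp: Id_on_def)
          then show ?thesis ..
        next
          fix c assume "x = Some c" "y = None"
          then have False using pr by (auto simp: Id_on_def)
          then show ?thesis ..
        qed
      qed
    qed
    have "rcong_gen ?S0 ?f0 X0 = rcong_gen ?S0 ?f0 (map_prod Some Some ` X)"
      unfolding rcong_gen_def eqset ..
    also have "\<dots> = map_prod Some Some ` rcong_gen S f X \<union> Id_on (?S0 - Some ` S)"
      by (rule gen0[OF sg XS])
    finally have G: "rcong_gen ?S0 ?f0 X0 = map_prod Some Some ` rcong_gen S f X \<union> Id_on (?S0 - Some ` S)" .
    have E: "map_prod Some Some ` rann S f a \<union> Id_on (?S0 - Some ` S)
       = map_prod Some Some ` rcong_gen S f X \<union> Id_on (?S0 - Some ` S)"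
      by (simp only: R0[symmetric] X0(3) G)
    have "rann S f a = rcong_gen S f X"
    proof (intro set_eqI)
      fix p :: "'a \<times> 'a"
      obtain s t where p: "p = (s,t)" by fastforce
      have "((Some s, Some t) \<in> map_prod Some Some ` rann S f a \<union> Id_on (?S0 - Some ` S))
        = ((Some s, Some t) \<in> map_prod Some Some ` rcong_gen S f X \<union> Id_on (?S0 - Some ` S))"
        using E by simp
      moreover have "((Some s, Some t) \<in> map_prod Some Some ` R \<union> Id_on (?S0 - Some ` S)) = ((s,t) \<in> R)" for R
        using ms_inj[of "(s,t)" R] A by (auto simp: Id_on_def image_iff)
      ultimately show "p \<in> rann S f a \<longleftrightarrow> p \<in> rcong_gen S f X" using p by simp
    qed
    then show "fg_right_congruence S f (rann S f a)"
      by (rule fgI[OF sg Xf XS])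
  next
    assume "fg_right_congruence S f (rann S f a)"
    from fgE[OF this] obtain X where X: "finite X" "X \<subseteq> S \<times> S" "rann S f a = rcong_gen S f X"
      by (elim exE conjE) (rule that)
    have X0: "map_prod Some Some ` X \<subseteq> ?S0 \<times> ?S0" using X(2) A by auto
    have Xf: "finite (map_prod Some Some ` X)" using X(1) by simp
    have "rann ?S0 ?f0 (Some a) = rcong_gen ?S0 ?f0 (map_prod Some Some ` X)"
      using R0 gen0[OF sg X(2)] X(3) by simp
    then show "fg_right_congruence ?S0 ?f0 (rann ?S0 ?f0 (Some a))"
      by (rule fgI[OF sg0' Xf X0])
  qed
qed

theorem mainTheorem10:
  fixes S :: "'a set" and f :: "'a \<Rightarrow> 'a \<Rightarrow> 'a"
  assumes "semigroup_on S f"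
  shows "fin_right_equated (zero_adj_carrier S f) (zero_adj_mult f)
    \<longleftrightarrow> fin_right_equated S f \<and>
        (\<exists>U. finite U \<and> U \<subseteq> S \<and> S = right_ideal_gen S f U)"
proof -
  note sg = assms
  let ?S0 = "zero_adj_carrier S f" and ?f0 = "zero_adj_mult f"
  have A: "Some ` S \<subseteq> ?S0" "?S0 \<subseteq> insert None (Some ` S)"
    by (rule S0_bounds)+
  have sg0': "semigroup_on ?S0 ?f0" by (rule sg0[OF sg])
  show ?thesis
  proof
    assume F0: "fin_right_equated ?S0 ?f0"
    have "fin_right_equated S f"
      unfolding fin_right_equated_def
    proof
      fix a assume a: "a \<in> S"
      then have "Some a \<in> ?S0" using A by auto
      then have "fg_right_congruence ?S0 ?f0 (rann ?S0 ?f0 (Some a))"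
        using F0 unfolding fin_right_equated_def by blast
      then show "fg_right_congruence S f (rann S f a)"
        using fg_iff[OF sg a] by simp
    qed
    moreover
    obtain z where z: "z \<in> ?S0" "\<forall>s\<in>?S0. ?f0 z s = z \<and> ?f0 s z = z" using hz0 by blast
    obtain U0 where U0: "finite U0" "U0 \<subseteq> ?S0" "?S0 = right_ideal_gen ?S0 ?f0 U0"
      using zero_case[OF sg0' z F0] by blast
    define U where "U = Some -` U0"
    have Uf: "finite U" unfolding U_def using U0(1) by (intro finite_vimageI) auto
    have US: "U \<subseteq> S" unfolding U_def using U0(2) A by auto
    have "S \<subseteq> right_ideal_gen S f U"
    proof
      fix s assume s: "s \<in> S"
      then have "Some s \<in> right_ideal_gen ?S0 ?f0 U0" using A U0(3) by auto
      then consider "Some s \<in> U0" | u c where "u \<in> U0" "c \<in> ?S0" "Some s = ?f0 u c"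
        unfolding right_ideal_gen_def by blast
      then show "s \<in> right_ideal_gen S f U"
      proof cases
        case 1 then show ?thesis unfolding U_def right_ideal_gen_def by auto
      next
        case 2
        then obtain u' c' where uc: "u = Some u'" "c = Some c'" "s = f u' c'"
          by (cases u; cases c) auto
        then have "u' \<in> U" "c' \<in> S" using 2 A unfolding U_def by auto
        then show ?thesis using uc unfolding right_ideal_gen_def by auto
      qed
    qed
    then have "S = right_ideal_gen S f U" using rig_sub[OF sg US] by blast
    ultimately show "fin_right_equated S f \<and> (\<exists>U. finite U \<and> U \<subseteq> S \<and> S = right_ideal_gen S f U)"
      using Uf US by blast
  next
    assume H: "fin_right_equated S f \<and> (\<exists>U. finite U \<and> U \<subseteq> S \<and> S = right_ideal_gen S f U)"
    then obtain U where U: "finite U" "U \<subseteq> S" "S = right_ideal_gen S f U" by blast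
    show "fin_right_equated ?S0 ?f0"
      unfolding fin_right_equated_def
    proof
      fix a0 assume a0: "a0 \<in> ?S0"
      show "fg_right_congruence ?S0 ?f0 (rann ?S0 ?f0 a0)"
      proof (cases a0)
        case (Some a)
        then have a: "a \<in> S" using a0 A by auto
        then have "fg_right_congruence S f (rann S f a)" using H unfolding fin_right_equated_def by blast
        then show ?thesis using fg_iff[OF sg a] Some by simp
      next
        case None
        define X0 where "X0 = (\<lambda>u. (None :: 'a option, Some u)) ` U"
        have X0S: "X0 \<subseteq> ?S0 \<times> ?S0" using a0 None U(2) A unfolding X0_def by auto
        have X0f: "finite X0" using U(1) unfolding X0_def by simp
        let ?L = "rcong_gen ?S0 ?f0 X0"
        have rc0: "right_congruence ?S0 ?f0 ?L" by (rule rcong_gen_rc[OF sg0' X0S])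
        have key: "(None, Some s) \<in> ?L" if s: "s \<in> S" for s
        proof -
          from s U(3) consider "s \<in> U" | u c where "u \<in> U" "c \<in> S" "s = f u c"
            unfolding right_ideal_gen_def by blast
          then show ?thesis
          proof cases
            case 1 then show ?thesis using rcong_gen_sub[of X0] unfolding X0_def by blast
          next
            case 2
            have "(None, Some u) \<in> ?L" using 2 rcong_gen_sub[of X0] unfolding X0_def by blast
            moreover have "Some c \<in> ?S0" using 2 A by auto
            ultimately have "(?f0 None (Some c), ?f0 (Some u) (Some c)) \<in> ?L"
              by (rule rcC[OF rc0])
            then show ?thesis using 2 by simp
          qed
        qed
        have key2: "(None, x) \<in> ?L" if x: "x \<in> ?S0" for x
        proof (cases x)
          case None then show ?thesis using rcR[OF rc0 x] by simp
        next
          case (Some s) then show ?thesis using key x A by auto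
        qed
        have "rann ?S0 ?f0 a0 = ?L"
        proof (intro equalityI subsetI)
          fix p assume "p \<in> rann ?S0 ?f0 a0"
          then obtain x y where xy: "p = (x,y)" "x \<in> ?S0" "y \<in> ?S0" unfolding rann_def by auto
          have "(None, x) \<in> ?L" "(None, y) \<in> ?L" using key2 xy by auto
          then show "p \<in> ?L" using rcT[OF rc0 rcSy[OF rc0]] xy(1) by blast
        next
          fix p assume "p \<in> ?L"
          then show "p \<in> rann ?S0 ?f0 a0" using rcS[OF rc0] None unfolding rann_def by (cases p) auto
        qed
        then show ?thesis by (rule fgI[OF sg0' X0f X0S])
      qed
    qed
  qed
qed

end
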